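(* Let $\ell,m,n$ be positive integers with $\ell<n$, $m<n$, $\gcd(m,n)=1$, and let $\mathcal{X},\mathcal{Y},\hat{\mathcal{X}},\hat{\mathcal{Y}},\check{\mathcal{X}},\check{\mathcal{Y}}$ be the words defined in the context from $\mathcal{S}=\mathcal{F}[\ell,m,n]$. Then, as words of length $n$, $$\mathcal{F}[\ell,m,n]=\mathcal{X}\mathcal{Y}=\hat{\mathcal{X}}\hat{\mathcal{Y}},\qquad \mathcal{F}[\ell,m,n]^{(\ell d)}=\mathcal{Y}\mathcal{X}=\check{\mathcal{X}}\check{\mathcal{Y}},$$ $$\mathcal{F}[\ell,m,n]^{(-d)}=\mathcal{X}^{\overline0}\mathcal{Y}^{\overline0}=\hat{\mathcal{Y}}\hat{\mathcal{X}},\qquad \mathcal{F}[\ell,m,n]^{((\ell-1)d)}=\mathcal{Y}^{\overline0}\mathcal{X}^{\overline0}=\check{\mathcal{Y}}\check{\mathcal{X}}.$$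
   Context: For positive integers $\ell<n$, $m<n$, $\gcd(m,n)=1$, $\mathcal{F}[\ell,m,n]_i=L$ if $im\bmod n<\ell$ and $R$ otherwise; it has period $n$ and is identified with the word $\mathcal{F}_0\cdots\mathcal{F}_{n-1}$. $d\in\{1,\dots,n-1\}$ is the inverse of $m$ mod $n$. For a sequence $\mathcal{S}$ of period $n$, $\mathcal{S}^{(j)}_i=\mathcal{S}_{i+j}$ (left shift, identified with the word $\mathcal{S}^{(j)}_0\cdots\mathcal{S}^{(j)}_{n-1}$). Words are finite strings over $\{L,R\}$, indexed from $0$; juxtaposition is concatenation; for a word $\mathcal{W}$, $\mathcal{W}^{\overline0}$ is $\mathcal{W}$ with its symbol of index $0$ changed. With $\mathcal{S}=\mathcal{F}[\ell,m,n]$ and all indices of $\mathcal{S}$ taken mod $n$, for an integer $p$ and $q\ge1$ write $\mathcal{S}[p;q]=\mathcal{S}_p\mathcal{S}_{p+1}\cdots\mathcal{S}_{p+q-1}$. Then $\mathcal{X}=\mathcal{S}[0;\ell d\bmod n]$ (the symbols $\mathcal{S}_0\cdots\mathcal{S}_{(\ell d-1)\bmod n}$), $\mathcal{Y}=\mathcal{S}_{\ell d\bmod n}\cdots\mathcal{S}_{n-1}$, $\hat{\mathcal{X}}=\mathcal{S}_0\cdots\mathcal{S}_{n-d-1}$, $\hat{\mathcal{Y}}=\mathcal{S}_{n-d}\cdots\mathcal{S}_{n-1}$, $\check{\mathcal{X}}=\mathcal{S}[\ell d;\,n-d]$ (cyclically from $\mathcal{S}_{\ell d\bmod n}$ to $\mathcal{S}_{((\ell-1)d-1)\bmod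 n}$), and $\check{\mathcal{Y}}=\mathcal{S}[(\ell-1)d;\,d]$ (cyclically from $\mathcal{S}_{(\ell-1)d\bmod n}$ to $\mathcal{S}_{(\ell d-1)\bmod n}$). *)

theory Defs
  imports Main
begin

datatype LR = L | R

fun flipLR :: "LR \<Rightarrow> LR" where
  "flipLR L = R" | "flipLR R = L"

text \<open>Sequences of period n are modelled as functions on the integers.\<close>

definition Fseq :: "nat \<Rightarrow> nat \<Rightarrow> nat \<Rightarrow> int \<Rightarrow> LR" where
  "Fseq l m n i = (if (i * int m) mod int n < int l then L else R)"

definition shiftseq :: "(int \<Rightarrow> LR) \<Rightarrow> int \<Rightarrow> int \<Rightarrow> LR" where
  "shiftseq S j = (\<lambda>i. S (i + j))"

text \<open>S[p;q] = S_p S_(p+1) ... S_(p+q-1); the word of a period-n sequence is S[0;n].\<close>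
definition seg :: "(int \<Rightarrow> LR) \<Rightarrow> int \<Rightarrow> nat \<Rightarrow> LR list" where
  "seg S p q = map (\<lambda>k. S (p + int k)) [0..<q]"

fun flip0 :: "LR list \<Rightarrow> LR list" where
  "flip0 [] = []" | "flip0 (a # w) = flipLR a # w"

end

theory Submission
  imports Defs
begin

lemma seg_append: "seg S p (a + b) = seg S p a @ seg S (p + int a) b"
  by (induct b) (auto simp: seg_def add.assoc)

lemma seg_shift: "seg (shiftseq S j) 0 q = seg S j q"
  by (simp add: seg_def shiftseq_def add.commute)

lemma Fseq_mod: "Fseq l m n j = Fseq l m n (j mod int n)"
  by (simp add: Fseq_def mod_mult_left_eq)

lemma seg_mod:
  assumes "p mod int n = p' mod int n"
  shows "seg (Fseq l m n) p q = seg (Fseq l m n) p' q"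
proof -
  have "(p + int k) mod int n = (p' + int k) mod int n" for k
    by (metis assms mod_add_left_eq)
  then show ?thesis unfolding seg_def
    by (metis (no_types, lifting) Fseq_mod map_eq_conv)
qed

lemma seg_flip0:
  assumes "\<forall>k<q. T (p + int k) = (if k = 0 then flipLR (S (p' + int k)) else S (p' + int k))"
  shows "seg T p q = flip0 (seg S p' q)"
proof (cases q)
  case 0 then show ?thesis by (simp add: seg_def)
next
  case (Suc q')
  have e: "[0..<Suc q'] = 0 # map Suc [0..<q']" by (simp add: map_Suc_upt upt_conv_Cons)
  show ?thesis using assms unfolding Suc seg_def e
    apply auto
    subgoal for x using assms[rule_format, of "Suc x"] Suc by simp
    done
qed

lemma keyK:
  fixes l m n d :: nat and j :: int
  assumes "0 < l" "l < n" "(m * d) mod n = 1"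
  shows "Fseq l m n (j - int d) = (if j mod int n = 0 \<or> j mod int n = int ((l * d) mod n)
          then flipLR (Fseq l m n j) else Fseq l m n j)"
proof -
  have n0: "int n > 1" using assms by auto
  have md: "(int d * int m) mod int n = 1" using assms(3)
    by (metis mult.commute of_nat_1 of_nat_mod of_nat_mult)
  define r where "r = (j * int m) mod int n"
  have r0: "0 \<le> r" "r < int n" using n0 by (auto simp: r_def)
  have sh: "((j - int d) * int m) mod int n = (r - 1) mod int n"
  proof -
    have "((j - int d) * int m) mod int n = (j * int m - int d * int m) mod int n"
      by (simp add: algebra_simps)
    also have "\<dots> = (r - (int d * int m) mod int n) mod int n"
      by (simp add: r_def mod_diff_eq)
    finally show ?thesis using md by simp
  qed
  have jmod: "j mod int n = (r * int d) mod int n"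
  proof -
    have "(r * int d) mod int n = (j * (int m * int d)) mod int n"
      by (simp add: r_def mod_mult_left_eq mult.assoc)
    also have "\<dots> = (j * ((int m * int d) mod int n)) mod int n"
      by (simp add: mod_mult_right_eq)
    also have "(int m * int d) mod int n = 1" using md by (simp add: mult.commute)
    finally show ?thesis by simp
  qed
  have e: "int ((l * d) mod n) = (int l * int d) mod int n"
    by (simp add: of_nat_mod)
  have c1: "j mod int n = 0 \<longleftrightarrow> r = 0"
  proof
    assume "j mod int n = 0" then show "r = 0" unfolding r_def
      by (metis mod_mult_left_eq mult_zero_left mod_0)
  next
    assume "r = 0" then show "j mod int n = 0" using jmod by simp
  qed
  have c2: "j mod int n = int ((l * d) mod n) \<longleftrightarrow> r = int l"
  proof
    assume h: "j mod int n = int ((l * d) mod n)"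
    have "r = ((j mod int n) * int m) mod int n" by (simp add: r_def mod_mult_left_eq)
    also have "\<dots> = ((int l * int d) mod int n * int m) mod int n" using h e by simp
    also have "\<dots> = (int l * (int d * int m)) mod int n" by (simp add: mod_mult_left_eq mult.assoc)
    also have "\<dots> = (int l * ((int d * int m) mod int n)) mod int n" by (simp add: mod_mult_right_eq)
    also have "\<dots> = int l" using md assms by simp
    finally show "r = int l" .
  next
    assume "r = int l" then show "j mod int n = int ((l * d) mod n)" using jmod e by simp
  qed
  show ?thesis
  proof (cases "r = 0")
    case True
    have "(r - 1) mod int n = int n - 1" using True n0
      by (simp add: zmod_minus1)
    then show ?thesis using True c1 assms sh unfolding Fseq_def r_def by auto
  next
    case False
    have "(r - 1) mod int n = r - 1" using False r0 by simp
    then show ?thesis using False c1 c2 assms sh r0 unfolding Fseq_def r_def by auto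
  qed
qed


theorem proposition3p3:
  fixes l m n d :: nat
  assumes "0 < l" "0 < m" "l < n" "m < n" "coprime m n"
    and "1 \<le> d" "d \<le> n - 1" "(m * d) mod n = 1"
  shows "let S = Fseq l m n;
             e = (l * d) mod n;
             X = seg S 0 e;
             Y = seg S (int e) (n - e);
             Xh = seg S 0 (n - d);
             Yh = seg S (int n - int d) d;
             Xc = seg S (int l * int d) (n - d);
             Yc = seg S ((int l - 1) * int d) d
         in seg S 0 n = X @ Y \<and> seg S 0 n = Xh @ Yh
          \<and> seg (shiftseq S (int l * int d)) 0 n = Y @ X
          \<and> seg (shiftseq S (int l * int d)) 0 n = Xc @ Yc
          \<and> seg (shiftseq S (- int d)) 0 n = flip0 X @ flip0 Y
          \<and> seg (shiftseq S (- int d)) 0 n = Yh @ Xh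
          \<and> seg (shiftseq S ((int l - 1) * int d)) 0 n = flip0 Y @ flip0 X
          \<and> seg (shiftseq S ((int l - 1) * int d)) 0 n = Yc @ Xc"
proof -
  define S where "S = Fseq l m n"
  define e where "e = (l * d) mod n"
  have n1: "1 < n" using assms by auto
  have dn: "d < n" using assms by auto
  have ie: "int e = (int l * int d) mod int n" unfolding e_def by (simp add: of_nat_mod)
  have en: "e < n" using n1 unfolding e_def by simp
  have e0: "e \<noteq> 0"
  proof
    assume "e = 0"
    then have "n dvd l * d" unfolding e_def by auto
    then have "n dvd l * d * m" by simp
    then have "(l * (m * d)) mod n = 0" by (simp add: mult.commute mult.left_commute)
    then have "(l * ((m * d) mod n)) mod n = 0" by (metis mod_mult_right_eq)
    then show False using assms by simp
  qed
  have K: "\<And>j. S (j - int d) = (if j mod int n = 0 \<or> j mod int n = int e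
          then flipLR (S j) else S j)"
    unfolding S_def e_def using keyK[OF assms(1) assms(3) assms(8)] by blast
  have SM: "\<And>p p' q. p mod int n = p' mod int n \<Longrightarrow> seg S p q = seg S p' q"
    unfolding S_def by (rule seg_mod)
  have split: "\<And>p a. a \<le> n \<Longrightarrow> seg S p n = seg S p a @ seg S (p + int a) (n - a)"
    by (metis le_add_diff_inverse seg_append)
  have split2: "\<And>p a. a \<le> n \<Longrightarrow> seg S p n = seg S p (n - a) @ seg S (p + int (n - a)) a"
    by (metis le_add_diff_inverse2 diff_le_self seg_append)
  define X where "X = seg S 0 e"
  define Y where "Y = seg S (int e) (n - e)"
  have A: "seg S 0 n = X @ Y" unfolding X_def Y_def using split[of e 0] en by simp
  have B: "seg S 0 n = seg S 0 (n - d) @ seg S (int n - int d) d"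
    using split2[of d 0] dn by (simp add: of_nat_diff)
  have C: "seg S (int l * int d) n = Y @ X"
  proof -
    have "seg S (int l * int d) n = seg S (int e) n" by (rule SM) (simp add: ie)
    also have "\<dots> = Y @ seg S (int e + int (n - e)) e" unfolding Y_def using split2[of e "int e"] en by simp
    also have "seg S (int e + int (n - e)) e = X" unfolding X_def
      by (rule SM) (use en in \<open>simp add: of_nat_diff less_imp_le\<close>)
    finally show ?thesis .
  qed
  have D: "seg S (int l * int d) n = seg S (int l * int d) (n - d) @ seg S ((int l - 1) * int d) d"
  proof -
    have "seg S (int l * int d) n = seg S (int l * int d) (n - d) @ seg S (int l * int d + int (n - d)) d"
      using split2[of d "int l * int d"] dn by simp
    also have "seg S (int l * int d + int (n - d)) d = seg S ((int l - 1) * int d) d"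
    proof (rule SM)
      have "int l * int d + int (n - d) = (int l - 1) * int d + int n" using dn by (simp add: of_nat_diff algebra_simps)
      then show "(int l * int d + int (n - d)) mod int n = ((int l - 1) * int d) mod int n" by simp
    qed
    finally show ?thesis .
  qed
  have E: "seg S (- int d) n = flip0 X @ flip0 Y"
  proof -
    have "seg S (- int d) n = seg S (- int d) e @ seg S (- int d + int e) (n - e)"
      using split[of e "- int d"] en by simp
    also have "seg S (- int d) e = flip0 X" unfolding X_def
    proof (rule seg_flip0, intro allI impI)
      fix k assume k: "k < e"
      have "int k mod int n = int k" using k en by simp
      then show "S (- int d + int k) = (if k = 0 then flipLR (S (0 + int k)) else S (0 + int k))"
        using K[of "int k"] k by (simp add: add.commute)
    qed
    also have "seg S (- int d + int e) (n - e) = flip0 Y" unfolding Y_def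
    proof (rule seg_flip0, intro allI impI)
      fix k assume k: "k < n - e"
      have "(int e + int k) mod int n = int e + int k" using k en by simp
      then show "S (- int d + int e + int k) = (if k = 0 then flipLR (S (int e + int k)) else S (int e + int k))"
        using K[of "int e + int k"] k e0 by (simp add: algebra_simps)
    qed
    finally show ?thesis .
  qed
  have F: "seg S (- int d) n = seg S (int n - int d) d @ seg S 0 (n - d)"
  proof -
    have "seg S (- int d) n = seg S (- int d) d @ seg S (- int d + int d) (n - d)"
      using split[of d "- int d"] dn by simp
    also have "seg S (- int d) d = seg S (int n - int d) d" by (rule SM) simp
    finally show ?thesis by simp
  qed
  have G: "seg S ((int l - 1) * int d) n = flip0 Y @ flip0 X"
  proof -
    have "seg S ((int l - 1) * int d) n = seg S ((int l - 1) * int d) (n - e) @ seg S ((int l - 1) * int d + int (n - e)) e"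
      using split2[of e] en by simp
    also have "seg S ((int l - 1) * int d) (n - e) = flip0 Y" unfolding Y_def
    proof (rule seg_flip0, intro allI impI)
      fix k assume k: "k < n - e"
      have "(int l * int d + int k) mod int n = (int e + int k) mod int n"
        by (simp add: ie mod_add_left_eq)
      also have "\<dots> = int e + int k" using k en by simp
      finally have m: "(int l * int d + int k) mod int n = int e + int k" .
      have s: "S (int l * int d + int k) = S (int e + int k)"
        unfolding S_def by (metis Fseq_mod m)
      show "S ((int l - 1) * int d + int k) = (if k = 0 then flipLR (S (int e + int k)) else S (int e + int k))"
      proof -
        have eq: "(int l - 1) * int d + int k = (int l * int d + int k) - int d" by (simp add: algebra_simps)
        show ?thesis unfolding eq K[of "int l * int d + int k"] m s using e0 by simp
      qed
    qed
    also have "seg S ((int l - 1) * int d + int (n - e)) e = flip0 X" unfolding X_def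
    proof (rule seg_flip0, intro allI impI)
      fix k assume k: "k < e"
      have "(int l * int d + int (n - e) + int k) mod int n = (int e + int (n - e) + int k) mod int n"
        unfolding ie by (metis mod_add_left_eq add.assoc)
      also have "\<dots> = int k" using k en by (simp add: of_nat_diff)
      finally have m: "(int l * int d + int (n - e) + int k) mod int n = int k" .
      have s: "S (int l * int d + int (n - e) + int k) = S (int k)"
        unfolding S_def using k en by (metis Fseq_mod m mod_pos_pos_trivial of_nat_0_le_iff of_nat_less_iff)
      show "S ((int l - 1) * int d + int (n - e) + int k) = (if k = 0 then flipLR (S (0 + int k)) else S (0 + int k))"
      proof -
        have eq: "(int l - 1) * int d + int (n - e) + int k = (int l * int d + int (n - e) + int k) - int d" by (simp add: algebra_simps)
        show ?thesis unfolding eq K[of "int l * int d + int (n - e) + int k"] m s using k by simp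
      qed
    qed
    finally show ?thesis .
  qed
  have H: "seg S ((int l - 1) * int d) n = seg S ((int l - 1) * int d) d @ seg S (int l * int d) (n - d)"
    using split[of d "(int l - 1) * int d"] dn by (simp add: algebra_simps)
  show ?thesis
    unfolding Let_def seg_shift S_def[symmetric] e_def[symmetric] X_def[symmetric] Y_def[symmetric]
    using A B C D E F G H by simp
qed

end
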